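(* Let $\beta\in\mathbb{N}=\{0,1,2,\dots\}$, let $\alpha,\lambda\in\mathbb{D}\setminus\{0\}$, let $\phi_\alpha(z)=\dfrac{\alpha-z}{1-\overline{\alpha}z}$, and let $\phi=\phi_\alpha\circ(\lambda\phi_\alpha)$, i.e. $\phi(z)=\phi_\alpha(\lambda\phi_\alpha(z))$. Then the composition operator $C_\phi f=f\circ\phi$ is not complex symmetric on $A^2_\beta$.
   Context: $\mathbb{D}$ is the open unit disc. For $\beta>-1$, $A^2_\beta$ is the Hilbert space of analytic functions $f(z)=\sum_{n\ge0}\widehat f(n)z^n$ on $\mathbb{D}$ with inner product $\langle f,g\rangle=\sum_{n\ge0}\frac{n!\,\Gamma(2+\beta)}{\Gamma(n+2+\beta)}\widehat f(n)\overline{\widehat g(n)}$ (equivalently the $L^2$ inner product with respect to $(\beta+1)(1-|z|^2)^\beta dA(z)$). A conjugation is a conjugate-linear map $C$ with $C^2=I$ and $\langle Cf,Cg\rangle=\langle g,f\rangle$; a bounded operator $T$ is complex symmetric if $CT=T^*C$ for some conjugation $C$. *)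

theory Defs
  imports "HOL-Complex_Analysis.Complex_Analysis"
begin

definition bergman_weight :: "real \<Rightarrow> nat \<Rightarrow> real" where
  "bergman_weight \<beta> n = fact n * Gamma (2 + \<beta>) / Gamma (real n + 2 + \<beta>)"

definition taylor_coeff :: "(complex \<Rightarrow> complex) \<Rightarrow> nat \<Rightarrow> complex" where
  "taylor_coeff f n = (deriv ^^ n) f 0 / of_nat (fact n)"

text \<open>A^2_beta: analytic functions on the unit disc (normalised to 0 off the disc,
  so that elements are identified with their restriction to the disc) with finite norm.\<close>
definition A2 :: "real \<Rightarrow> (complex \<Rightarrow> complex) set" where
  "A2 \<beta> = {f. f holomorphic_on ball 0 1 \<and> (\<forall>z. z \<notin> ball 0 1 \<longrightarrow> f z = 0) \<and>
             summable (\<lambda>n. bergman_weight \<beta> n * (cmod (taylor_coeff f n))\<^sup>2)}"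

definition A2_inner :: "real \<Rightarrow> (complex \<Rightarrow> complex) \<Rightarrow> (complex \<Rightarrow> complex) \<Rightarrow> complex" where
  "A2_inner \<beta> f g = (\<Sum>n. of_real (bergman_weight \<beta> n) * taylor_coeff f n * cnj (taylor_coeff g n))"

definition comp_op :: "(complex \<Rightarrow> complex) \<Rightarrow> (complex \<Rightarrow> complex) \<Rightarrow> (complex \<Rightarrow> complex)" where
  "comp_op \<phi> f = (\<lambda>z. if z \<in> ball 0 1 then f (\<phi> z) else 0)"

definition disc_auto :: "complex \<Rightarrow> complex \<Rightarrow> complex" where
  "disc_auto a z = (a - z) / (1 - cnj a * z)"

definition conjugation_on ::
  "(complex \<Rightarrow> complex) set \<Rightarrow> ((complex \<Rightarrow> complex) \<Rightarrow> (complex \<Rightarrow> complex) \<Rightarrow> complex) \<Rightarrow> ((complex \<Rightarrow> complex) \<Rightarrow> (complex \<Rightarrow> complex)) \<Rightarrow> bool" where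
  "conjugation_on H ip C \<longleftrightarrow>
     C ` H \<subseteq> H \<and>
     (\<forall>f\<in>H. \<forall>g\<in>H. C (\<lambda>z. f z + g z) = (\<lambda>z. C f z + C g z)) \<and>
     (\<forall>c::complex. \<forall>f\<in>H. C (\<lambda>z. c * f z) = (\<lambda>z. cnj c * C f z)) \<and>
     (\<forall>f\<in>H. C (C f) = f) \<and>
     (\<forall>f\<in>H. \<forall>g\<in>H. ip (C f) (C g) = ip g f)"

definition is_adjoint_on ::
  "'a set \<Rightarrow> ('a \<Rightarrow> 'a \<Rightarrow> complex) \<Rightarrow> ('a \<Rightarrow> 'a) \<Rightarrow> ('a \<Rightarrow> 'a) \<Rightarrow> bool" where
  "is_adjoint_on H ip T S \<longleftrightarrow> S ` H \<subseteq> H \<and> (\<forall>f\<in>H. \<forall>g\<in>H. ip (T f) g = ip f (S g))"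

definition complex_symmetric_on ::
  "(complex \<Rightarrow> complex) set \<Rightarrow> ((complex \<Rightarrow> complex) \<Rightarrow> (complex \<Rightarrow> complex) \<Rightarrow> complex) \<Rightarrow> ((complex \<Rightarrow> complex) \<Rightarrow> (complex \<Rightarrow> complex)) \<Rightarrow> bool" where
  "complex_symmetric_on H ip T \<longleftrightarrow>
     (\<exists>C S. conjugation_on H ip C \<and> is_adjoint_on H ip T S \<and> (\<forall>f\<in>H. C (T f) = S (C f)))"

end

theory Submission
  imports Defs
begin

lemma bw_fact: "bergman_weight (real b) n = fact n * fact (Suc b) / fact (n + Suc b)"
proof -
  have 1: "Gamma (2 + real b) = fact (Suc b)"
    using Gamma_fact[of "Suc b", where 'a=real] by (simp add: add.commute)
  have 2: "Gamma (real n + 2 + real b) = fact (n + Suc b)"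
    using Gamma_fact[of "n + Suc b", where 'a=real] by (simp add: add.commute add.left_commute)
  show ?thesis unfolding bergman_weight_def 1 2 by simp
qed

lemma bw_pos: "bergman_weight (real b) n > 0"
  by (simp add: bw_fact)

lemma bw_0: "bergman_weight (real b) 0 = 1"
  by (simp add: bw_fact)

lemma bw_1: "bergman_weight (real b) 1 = 1 / (real b + 2)"
  by (simp add: bw_fact)

lemma bw_Suc: "bergman_weight (real b) (Suc n) = bergman_weight (real b) n * (real n + 1) / (real n + real b + 2)"
proof -
  have "fact (Suc n + Suc b) = (real n + real b + 2) * (fact (n + Suc b) :: real)"
    by (simp add: algebra_simps)
  moreover have "fact (Suc n) = (real n + 1) * (fact n :: real)" by simp
  ultimately show ?thesis unfolding bw_fact
    by (simp add: field_simps)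
qed

lemma bw_le1: "bergman_weight (real b) n \<le> 1"
proof (induction n)
  case 0 then show ?case by (simp add: bw_0)
next
  case (Suc n)
  have "(real n + 1) / (real n + real b + 2) \<le> 1" by simp
  moreover have "bergman_weight (real b) n \<ge> 0" using bw_pos[of b n] by simp
  ultimately have "bergman_weight (real b) n * ((real n + 1) / (real n + real b + 2)) \<le> 1 * 1"
    using Suc by (intro mult_mono) auto
  then show ?case by (simp add: bw_Suc)
qed

lemma bw_le_w1: "bergman_weight (real b) (Suc n) \<le> 1 / (real b + 2)"
proof (induction n)
  case 0 then show ?case using bw_1[of b] by simp
next
  case (Suc n)
  have "(real (Suc n) + 1) / (real (Suc n) + real b + 2) \<le> 1" by simp
  moreover have "bergman_weight (real b) (Suc n) \<ge> 0" using bw_pos[of b] by (simp add: less_imp_le)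
  ultimately have "bergman_weight (real b) (Suc n) * ((real (Suc n) + 1) / (real (Suc n) + real b + 2)) \<le> 1 / (real b + 2) * 1"
    using Suc by (intro mult_mono) auto
  then show ?case by (subst bw_Suc) simp
qed

lemma bw_rec: "(real n + 1) / bergman_weight (real b) (Suc n) = (real n + real b + 2) / bergman_weight (real b) n"
proof -
  have p: "bergman_weight (real b) n > 0" by (rule bw_pos)
  have q: "real n + 1 > 0" "real n + real b + 2 > 0" by auto
  show ?thesis unfolding bw_Suc using p q by (simp add: divide_simps)
qed

definition rst :: "(complex \<Rightarrow> complex) \<Rightarrow> complex \<Rightarrow> complex" where
  "rst g = (\<lambda>z. if z \<in> ball 0 1 then g z else 0)"

lemma tc_rst: "taylor_coeff (rst g) n = taylor_coeff g n"
proof -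
  have "eventually (\<lambda>z. rst g z = g z) (nhds 0)"
    using eventually_nhds_in_open[of "ball (0::complex) 1" 0] by (auto simp: rst_def elim!: eventually_mono)
  then show ?thesis unfolding taylor_coeff_def by (simp add: higher_deriv_cong_ev)
qed

lemma tc_sums:
  assumes "r > 0" "\<And>u. u \<in> ball 0 r \<Longrightarrow> (\<lambda>n. c n * u ^ n) sums f u"
  shows "taylor_coeff f n = c n"
proof -
  have "eventually (\<lambda>u. (\<lambda>n. fps_nth (Abs_fps c) n * u ^ n) sums f u) (nhds 0)"
    using eventually_nhds_in_open[of "ball (0::complex) r" 0] assms by (auto elim!: eventually_mono)
  then have "f has_fps_expansion Abs_fps c" by (rule has_fps_expansionI)
  from fps_nth_fps_expansion[OF this, of n] show ?thesis by (simp add: taylor_coeff_def)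
qed

lemma tc_cmult:
  assumes "f holomorphic_on A" "open A" "0 \<in> A"
  shows "taylor_coeff (\<lambda>z. c * f z) n = c * taylor_coeff f n"
  unfolding taylor_coeff_def using higher_deriv_cmult[OF assms(1,3,2)] by simp

lemma tc_diff:
  assumes "f holomorphic_on A" "g holomorphic_on A" "open A" "0 \<in> A"
  shows "taylor_coeff (\<lambda>z. f z - g z) n = taylor_coeff f n - taylor_coeff g n"
  unfolding taylor_coeff_def using higher_deriv_diff[OF assms] by (simp add: diff_divide_distrib)

lemma tc_add:
  assumes "f holomorphic_on A" "g holomorphic_on A" "open A" "0 \<in> A"
  shows "taylor_coeff (\<lambda>z. f z + g z) n = taylor_coeff f n + taylor_coeff g n"
  unfolding taylor_coeff_def using higher_deriv_add[OF assms] by (simp add: add_divide_distrib)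

lemma tc_bound:
  assumes "g holomorphic_on ball 0 \<rho>" "0 < r" "r < \<rho>" "\<And>z. norm z = r \<Longrightarrow> norm (g z) \<le> B"
  shows "norm (taylor_coeff g n) \<le> B / r ^ n"
proof -
  have s1: "ball 0 r \<subseteq> ball 0 \<rho>" "cball 0 r \<subseteq> ball 0 \<rho>" using assms(3) by auto
  have h: "g holomorphic_on ball 0 r" by (rule holomorphic_on_subset[OF assms(1) s1(1)])
  have c: "continuous_on (cball 0 r) g"
    by (rule continuous_on_subset[OF holomorphic_on_imp_continuous_on[OF assms(1)] s1(2)])
  have "norm ((deriv ^^ n) g 0) \<le> fact n * B / r ^ n"
    by (rule Cauchy_inequality[OF h c assms(2)]) (use assms(4) in auto)
  then have "norm ((deriv ^^ n) g 0) / fact n \<le> (fact n * B / r ^ n) / fact n"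
    by (rule divide_right_mono) auto
  then show ?thesis unfolding taylor_coeff_def
    by (simp add: norm_divide)
qed

lemma sphere_bound:
  assumes "continuous_on (cball 0 r) (g :: complex \<Rightarrow> complex)"
  shows "\<exists>B. \<forall>z. norm z = r \<longrightarrow> norm (g z) \<le> B"
proof -
  have "compact (g ` cball 0 r)" by (rule compact_continuous_image[OF assms compact_cball])
  then obtain B where "\<forall>x\<in>g ` cball 0 r. norm x \<le> B" using compact_imp_bounded bounded_iff by blast
  then have "norm (g z) \<le> B" if "norm z = r" for z
    using that by (metis image_eqI mem_cball_0 order_refl)
  then show ?thesis by blast
qed

lemma rst_in_A2:
  assumes "g holomorphic_on ball 0 \<rho>" "1 < \<rho>"
  shows "rst g \<in> A2 (real b)"
proof -
  define r where "r = (1 + \<rho>) / 2"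
  have r: "1 < r" "r < \<rho>" using assms(2) by (auto simp: r_def)
  have s1: "ball 0 1 \<subseteq> ball 0 \<rho>" "cball 0 r \<subseteq> ball 0 \<rho>" using r by auto
  have "continuous_on (cball 0 r) g"
    by (rule continuous_on_subset[OF holomorphic_on_imp_continuous_on[OF assms(1)] s1(2)])
  then obtain B where B: "\<And>z. norm z = r \<Longrightarrow> norm (g z) \<le> B" using sphere_bound by blast
  have tb: "norm (taylor_coeff g n) \<le> B / r ^ n" for n
    by (rule tc_bound[OF assms(1) _ r(2) B]) (use r in auto)
  have B0: "B \<ge> 0" using B[of r] r by (smt (verit) norm_ge_zero norm_of_real)
  have hol1: "rst g holomorphic_on ball 0 1"
  proof -
    have "g holomorphic_on ball 0 1" by (rule holomorphic_on_subset[OF assms(1) s1(1)])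
    then show ?thesis by (rule holomorphic_transform) (auto simp: rst_def)
  qed
  have S: "summable (\<lambda>n. B^2 * (1 / r^2) ^ n)"
    using r by (intro summable_mult summable_geometric) auto
  have Bn: "norm (bergman_weight (real b) n * (cmod (taylor_coeff (rst g) n))\<^sup>2) \<le> B^2 * (1 / r^2) ^ n" for n
  proof -
    have w: "0 \<le> bergman_weight (real b) n" "bergman_weight (real b) n \<le> 1"
      using bw_pos[of b n] bw_le1[of b n] by auto
    have "(cmod (taylor_coeff (rst g) n))\<^sup>2 \<le> (B / r^n)^2"
      unfolding tc_rst by (rule power_mono[OF tb]) auto
    also have "\<dots> = B^2 * (1 / r^2) ^ n" by (simp add: power_divide power_mult_distrib field_simps power_mult[symmetric] mult.commute)
    finally have "(cmod (taylor_coeff (rst g) n))\<^sup>2 \<le> B^2 * (1 / r^2) ^ n" .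
    then show ?thesis using w
      by (simp add: abs_mult) (smt (verit) mult_left_le_one_le zero_le_power2)
  qed
  have "summable (\<lambda>n. bergman_weight (real b) n * (cmod (taylor_coeff (rst g) n))\<^sup>2)"
    by (rule summable_comparison_test'[OF S, where N=0], rule Bn)
  then show ?thesis using hol1 unfolding A2_def by (auto simp: rst_def)
qed

abbreviation "wb b n \<equiv> bergman_weight (real b) n"

lemma A2_hol: "f \<in> A2 \<beta> \<Longrightarrow> f holomorphic_on ball 0 1"
  by (simp add: A2_def)

lemma A2_sum: "f \<in> A2 \<beta> \<Longrightarrow> summable (\<lambda>n. bergman_weight \<beta> n * (cmod (taylor_coeff f n))\<^sup>2)"
  by (simp add: A2_def)

lemma ip_summable:
  assumes "f \<in> A2 (real b)" "g \<in> A2 (real b)"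
  shows "summable (\<lambda>n. norm (of_real (wb b n) * taylor_coeff f n * cnj (taylor_coeff g n)))"
proof -
  have S: "summable (\<lambda>n. (wb b n * (cmod (taylor_coeff f n))\<^sup>2) / 2 + (wb b n * (cmod (taylor_coeff g n))\<^sup>2) / 2)"
    using A2_sum[OF assms(1)] A2_sum[OF assms(2)] by (intro summable_add summable_divide) auto
  have "norm (norm (of_real (wb b n) * taylor_coeff f n * cnj (taylor_coeff g n)))
     \<le> (wb b n * (cmod (taylor_coeff f n))\<^sup>2) / 2 + (wb b n * (cmod (taylor_coeff g n))\<^sup>2) / 2" for n
  proof -
    have w: "wb b n > 0" by (rule bw_pos)
    have "cmod (taylor_coeff f n) * cmod (taylor_coeff g n) \<le> ((cmod (taylor_coeff f n))\<^sup>2 + (cmod (taylor_coeff g n))\<^sup>2) / 2"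
      using sum_squares_bound[of "cmod (taylor_coeff f n)" "cmod (taylor_coeff g n)"] by simp
    then have "wb b n * (cmod (taylor_coeff f n) * cmod (taylor_coeff g n)) \<le> wb b n * (((cmod (taylor_coeff f n))\<^sup>2 + (cmod (taylor_coeff g n))\<^sup>2) / 2)"
      using w by (intro mult_left_mono) auto
    then show ?thesis using w by (simp add: norm_mult algebra_simps)
  qed
  then show ?thesis by (intro summable_comparison_test'[OF S, where N=0])
qed

lemma ip_summable': 
  assumes "f \<in> A2 (real b)" "g \<in> A2 (real b)"
  shows "summable (\<lambda>n. of_real (wb b n) * taylor_coeff f n * cnj (taylor_coeff g n))"
  using ip_summable[OF assms] by (rule summable_norm_cancel)

lemma ip_lin:
  assumes "f \<in> A2 (real b)" "g \<in> A2 (real b)" "w \<in> A2 (real b)"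
    and "\<And>n. taylor_coeff h n = a * taylor_coeff f n + c * taylor_coeff g n"
  shows "A2_inner (real b) h w = a * A2_inner (real b) f w + c * A2_inner (real b) g w"
proof -
  have "A2_inner (real b) h w = (\<Sum>n. a * (of_real (wb b n) * taylor_coeff f n * cnj (taylor_coeff w n))
      + c * (of_real (wb b n) * taylor_coeff g n * cnj (taylor_coeff w n)))"
    unfolding A2_inner_def assms(4) by (simp add: algebra_simps)
  also have "\<dots> = (\<Sum>n. a * (of_real (wb b n) * taylor_coeff f n * cnj (taylor_coeff w n)))
      + (\<Sum>n. c * (of_real (wb b n) * taylor_coeff g n * cnj (taylor_coeff w n)))"
    by (intro suminf_add[symmetric] summable_mult ip_summable' assms)
  also have "\<dots> = a * A2_inner (real b) f w + c * A2_inner (real b) g w"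
    unfolding A2_inner_def by (subst suminf_mult, intro ip_summable' assms)+ simp
  finally show ?thesis .
qed

lemma ip_scal2:
  assumes "f \<in> A2 (real b)" "w \<in> A2 (real b)"
  shows "A2_inner (real b) f (\<lambda>z. c * w z) = cnj c * A2_inner (real b) f w"
proof -
  have "taylor_coeff (\<lambda>z. c * w z) n = c * taylor_coeff w n" for n
    by (rule tc_cmult[OF A2_hol[OF assms(2)]]) auto
  then have "A2_inner (real b) f (\<lambda>z. c * w z) = (\<Sum>n. cnj c * (of_real (wb b n) * taylor_coeff f n * cnj (taylor_coeff w n)))"
    unfolding A2_inner_def by (simp add: algebra_simps)
  also have "\<dots> = cnj c * A2_inner (real b) f w"
    unfolding A2_inner_def by (intro suminf_mult ip_summable' assms)
  finally show ?thesis .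
qed

lemma ip_scal1:
  assumes "f \<in> A2 (real b)" "w \<in> A2 (real b)"
  shows "A2_inner (real b) (\<lambda>z. c * f z) w = c * A2_inner (real b) f w"
proof -
  have "taylor_coeff (\<lambda>z. c * f z) n = c * taylor_coeff f n + 0 * taylor_coeff f n" for n
    using tc_cmult[OF A2_hol[OF assms(1)], of c n] by auto
  from ip_lin[OF assms(1) assms(1) assms(2) this] show ?thesis by simp
qed

definition Om :: "nat \<Rightarrow> real \<Rightarrow> (complex \<Rightarrow> complex) \<Rightarrow> real" where
  "Om b r w = (\<Sum>n. wb b n * (cmod (taylor_coeff w n) / r ^ n))"

lemma Om_summable:
  assumes "w \<in> A2 (real b)" "1 < r"
  shows "summable (\<lambda>n. wb b n * (cmod (taylor_coeff w n) / r ^ n))"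
proof -
  have S: "summable (\<lambda>n. (wb b n * (cmod (taylor_coeff w n))\<^sup>2) / 2 + ((1 / r^2) ^ n) / 2)"
    using A2_sum[OF assms(1)] assms(2) by (intro summable_add summable_divide summable_geometric) auto
  have "norm (wb b n * (cmod (taylor_coeff w n) / r ^ n)) \<le> (wb b n * (cmod (taylor_coeff w n))\<^sup>2) / 2 + ((1 / r^2) ^ n) / 2" for n
  proof -
    have w: "wb b n > 0" "wb b n \<le> 1" by (rule bw_pos, rule bw_le1)
    have rn: "r ^ n > 0" using assms(2) by simp
    have e: "(1 / r^2) ^ n = (1 / r^n)^2" by (simp add: power_divide power_mult[symmetric] mult.commute)
    have "cmod (taylor_coeff w n) / r ^ n \<le> ((cmod (taylor_coeff w n))\<^sup>2 + (1 / r^n)^2) / 2"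
      using sum_squares_bound[of "cmod (taylor_coeff w n)" "1 / r^n"] by (simp add: mult.commute)
    then have "wb b n * (cmod (taylor_coeff w n) / r ^ n) \<le> wb b n * (((cmod (taylor_coeff w n))\<^sup>2 + (1 / r^n)^2) / 2)"
      using w by (intro mult_left_mono) auto
    also have "\<dots> \<le> (wb b n * (cmod (taylor_coeff w n))\<^sup>2) / 2 + ((1 / r^n)^2) / 2"
    proof -
      have "wb b n * (1 / r^n)^2 \<le> (1 / r^n)^2" using w by (intro mult_left_le_one_le) auto
      then show ?thesis by (simp add: algebra_simps add_divide_distrib)
    qed
    finally show ?thesis using w rn e by simp
  qed
  then show ?thesis by (intro summable_comparison_test'[OF S, where N=0])
qed

lemma ip_bound:
  assumes "g holomorphic_on ball 0 \<rho>" "1 < r" "r < \<rho>" "\<And>z. norm z = r \<Longrightarrow> norm (g z) \<le> B"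
    and "w \<in> A2 (real b)"
  shows "norm (A2_inner (real b) (rst g) w) \<le> B * Om b r w"
proof -
  have g: "rst g \<in> A2 (real b)" by (rule rst_in_A2[OF assms(1)]) (use assms in auto)
  have tb: "norm (taylor_coeff (rst g) n) \<le> B / r ^ n" for n
    unfolding tc_rst by (rule tc_bound[OF assms(1) _ assms(3,4)]) (use assms in auto)
  have "norm (A2_inner (real b) (rst g) w) \<le> (\<Sum>n. norm (of_real (wb b n) * taylor_coeff (rst g) n * cnj (taylor_coeff w n)))"
    unfolding A2_inner_def by (intro summable_norm ip_summable g assms)
  also have "\<dots> \<le> (\<Sum>n. B * (wb b n * (cmod (taylor_coeff w n) / r ^ n)))"
  proof (rule suminf_le)
    fix n
    have w: "wb b n > 0" by (rule bw_pos)
    have "wb b n * cmod (taylor_coeff (rst g) n) * cmod (taylor_coeff w n) \<le> wb b n * (B / r ^ n) * cmod (taylor_coeff w n)"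
      using w tb[of n] by (intro mult_right_mono mult_left_mono) auto
    then show "norm (of_real (wb b n) * taylor_coeff (rst g) n * cnj (taylor_coeff w n)) \<le> B * (wb b n * (cmod (taylor_coeff w n) / r ^ n))"
      using w by (simp add: norm_mult mult_ac)
  next
    show "summable (\<lambda>n. norm (of_real (wb b n) * taylor_coeff (rst g) n * cnj (taylor_coeff w n)))"
      by (intro ip_summable g assms)
    show "summable (\<lambda>n. B * (wb b n * (cmod (taylor_coeff w n) / r ^ n)))"
      by (intro summable_mult Om_summable assms)
  qed
  also have "\<dots> = B * Om b r w" unfolding Om_def
    by (intro suminf_mult Om_summable assms)
  finally show ?thesis .
qed

lemma tc_pow: "taylor_coeff (\<lambda>z. z ^ k) n = (if n = k then 1 else 0)"
proof -
  have "(\<lambda>n. (if n = k then 1 else 0) * u ^ n) sums u ^ k" for u :: complex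
  proof -
    have "(\<lambda>n. (if n = k then 1 else 0) * u ^ n) = (\<lambda>n. if n = k then u ^ n else 0)" by auto
    with sums_single[of k "\<lambda>n. u ^ n"] show ?thesis by simp
  qed
  then show ?thesis by (intro tc_sums[of 1]) auto
qed

lemma ip_mono:
  assumes "w \<in> A2 (real b)"
  shows "A2_inner (real b) (rst (\<lambda>z. z ^ k)) w = of_real (wb b k) * cnj (taylor_coeff w k)"
proof -
  have "(\<lambda>n. of_real (wb b n) * taylor_coeff (rst (\<lambda>z. z ^ k)) n * cnj (taylor_coeff w n))
      = (\<lambda>n. if n = k then of_real (wb b n) * cnj (taylor_coeff w n) else 0)"
    by (auto simp: tc_rst tc_pow)
  moreover have "(\<lambda>n. if n = k then of_real (wb b n) * cnj (taylor_coeff w n) else 0) sums (of_real (wb b k) * cnj (taylor_coeff w k))"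
    by (rule sums_single)
  ultimately show ?thesis unfolding A2_inner_def by (simp add: sums_iff)
qed

lemma G1: "(cmod (1 - cnj a * z))\<^sup>2 - (cmod (a - z))\<^sup>2 = (1 - (cmod a)\<^sup>2) * (1 - (cmod z)\<^sup>2)"
  unfolding cmod_power2 by (simp add: power2_eq_square algebra_simps)

lemma G2: "(cmod (1 - cnj a * z))\<^sup>2 - (cmod a)\<^sup>2 * (cmod (a - z))\<^sup>2 = (1 - (cmod a)\<^sup>2) * (1 + (cmod a)\<^sup>2 - 2 * Re (cnj a * z))"
  unfolding cmod_power2 by (simp add: power2_eq_square algebra_simps)

lemma psi_ball:
  assumes "cmod z < 1" "cmod a < 1"
  shows "cmod (disc_auto a z) < 1"
proof -
  have "(cmod (1 - cnj a * z))\<^sup>2 - (cmod (a - z))\<^sup>2 > 0"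
    unfolding G1 using assms by (intro mult_pos_pos) (auto simp: power_less_one_iff abs_square_less_1)
  then have "cmod (a - z) < cmod (1 - cnj a * z)"
    by (smt (verit) norm_ge_zero power_mono)
  moreover have "cmod (1 - cnj a * z) > 0"
    using calculation by (smt (verit) norm_ge_zero)
  ultimately show ?thesis unfolding disc_auto_def by (simp add: norm_divide divide_less_eq)
qed

lemma psi_inv:
  assumes "1 - cnj a * z \<noteq> 0" "cmod a \<noteq> 1"
  shows "disc_auto a (disc_auto a z) = z"
proof -
  have "cnj a * a \<noteq> 1"
  proof
    assume "cnj a * a = 1"
    then have "cmod (cnj a * a) = 1" by simp
    then show False using assms(2) by (simp add: norm_mult) (metis abs_norm_cancel abs_square_eq_1 power2_eq_square)
  qed
  then have "1 - cnj a * a \<noteq> 0" by simp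
  define D where "D = 1 - cnj a * z"
  have D: "D \<noteq> 0" using assms(1) by (simp add: D_def)
  have e1: "a - (a - z) / D = z * (1 - cnj a * a) / D" using D by (simp add: field_simps D_def)
  have e2: "1 - cnj a * ((a - z) / D) = (1 - cnj a * a) / D" using D by (simp add: field_simps D_def)
  show ?thesis unfolding disc_auto_def D_def[symmetric] e1 e2 using D \<open>1 - cnj a * a \<noteq> 0\<close> by simp
qed

lemma Re_le_cmod_mult: "Re (cnj a * z) \<le> cmod a * cmod z"
  using complex_Re_le_cmod[of "cnj a * z"] by (simp add: norm_mult)

lemma psi_big_ball:
  assumes "0 < cmod a" "cmod a < 1" "cmod z < (1 + (cmod a)\<^sup>2) / (2 * cmod a)"
  shows "1 - cnj a * z \<noteq> 0" "cmod (cnj a * disc_auto a z) < 1"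
proof -
  define A where "A = cmod a"
  have A: "0 < A" "A < 1" using assms by (auto simp: A_def)
  have "A * A < 1 * 1" using A by (intro mult_strict_mono) auto
  then have AA: "A\<^sup>2 < 1" by (simp add: power2_eq_square)
  have Az: "A * cmod z < (1 + A\<^sup>2) / 2"
  proof -
    have "A * cmod z < A * ((1 + A\<^sup>2) / (2 * A))" using assms(3) A unfolding A_def by (intro mult_strict_left_mono) auto
    also have "\<dots> = (1 + A\<^sup>2) / 2" using A by simp
    finally show ?thesis .
  qed
  have h1: "(1 + A\<^sup>2) / 2 < 1" using AA by simp
  have "cmod (1 - cnj a * z) \<ge> 1 - A * cmod z"
    using norm_triangle_ineq2[of 1 "cnj a * z"] by (simp add: norm_mult A_def)
  then have pos: "cmod (1 - cnj a * z) > 0" using Az h1 by linarith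
  then show "1 - cnj a * z \<noteq> 0" by auto
  have "Re (cnj a * z) < (1 + A\<^sup>2) / 2" using Re_le_cmod_mult[of a z] Az by (simp add: A_def)
  then have "1 + A\<^sup>2 - 2 * Re (cnj a * z) > 0" by (simp add: field_simps)
  moreover have "1 - A\<^sup>2 > 0" using AA by simp
  ultimately have "(1 - A\<^sup>2) * (1 + A\<^sup>2 - 2 * Re (cnj a * z)) > 0" by (intro mult_pos_pos)
  then have "(cmod (1 - cnj a * z))\<^sup>2 - A\<^sup>2 * (cmod (a - z))\<^sup>2 > 0"
    using G2[of a z] unfolding A_def by linarith
  then have "(A * cmod (a - z))\<^sup>2 < (cmod (1 - cnj a * z))\<^sup>2" by (simp add: power_mult_distrib)
  then have lt: "A * cmod (a - z) < cmod (1 - cnj a * z)"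
    by (rule power2_less_imp_less) simp
  have "cmod (cnj a * disc_auto a z) = A * cmod (a - z) / cmod (1 - cnj a * z)"
    unfolding disc_auto_def by (simp add: norm_mult norm_divide A_def)
  also have "\<dots> < 1" using lt pos by simp
  finally show "cmod (cnj a * disc_auto a z) < 1" .
qed


lemma psi_bounds:
  assumes "0 < cmod a" "cmod a < 1"
  obtains r M q where "1 < r" "r < (1 + (cmod a)\<^sup>2) / (2 * cmod a)" "q < 1"
    "\<And>z. cmod z \<le> r \<Longrightarrow> cmod (disc_auto a z) \<le> M \<and> cmod (cnj a * disc_auto a z) \<le> q"
proof -
  define A where "A = cmod a"
  have A: "0 < A" "A < 1" using assms by (auto simp: A_def)
  define r where "r = (1 + A)\<^sup>2 / (4 * A)"
  have sq: "(1 - A)\<^sup>2 > 0" using A by simp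
  have e1: "(1 + A)\<^sup>2 = 4 * A + (1 - A)\<^sup>2" by (simp add: power2_eq_square algebra_simps)
  have e2: "2 * (1 + A\<^sup>2) = (1 + A)\<^sup>2 + (1 - A)\<^sup>2" by (simp add: power2_eq_square algebra_simps)
  have r1: "1 < r" unfolding r_def using A sq e1 by (simp add: less_divide_eq)
  have r2: "r < (1 + A\<^sup>2) / (2 * A)" unfolding r_def using A sq e2
    by (simp add: divide_simps) (simp add: algebra_simps)
  have Ar: "A * r = (1 + A)\<^sup>2 / 4" unfolding r_def using A by simp
  have "(1 + A) * (1 + A) < 2 * 2" using A by (intro mult_strict_mono) auto
  then have Ar1: "A * r < 1" unfolding Ar by (simp add: power2_eq_square)
  have Ar0: "A * r > 0" using A r1 by simp
  define M where "M = (A + r) / (1 - A * r)"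
  define d1 where "d1 = (1 - A\<^sup>2) * ((1 - A)\<^sup>2 / 2)"
  have "A * A < 1 * 1" using A by (intro mult_strict_mono) auto
  then have AA: "A\<^sup>2 < 1" by (simp add: power2_eq_square)
  have "(1 - A) * (1 - A) \<le> 1 * 1" using A by (intro mult_mono) auto
  then have sq1: "(1 - A)\<^sup>2 \<le> 1" by (simp add: power2_eq_square)
  have "(1 - A\<^sup>2) * (1 - A)\<^sup>2 \<le> 1 * 1" using A AA sq1 by (intro mult_mono) auto
  then have d1: "0 < d1" "d1 < 1" unfolding d1_def using A AA sq
    by (auto intro!: mult_pos_pos)
  define q where "q = 1 - d1 / 8"
  have q: "q < 1" using d1 by (simp add: q_def)
  have bnd: "cmod (disc_auto a z) \<le> M \<and> cmod (cnj a * disc_auto a z) \<le> q" if z: "cmod z \<le> r" for z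
  proof
    have Az: "A * cmod z \<le> A * r" using z A by (simp add: mult_left_mono)
    have "cmod (1 - cnj a * z) \<ge> 1 - A * cmod z"
      using norm_triangle_ineq2[of 1 "cnj a * z"] by (simp add: norm_mult A_def)
    then have lo: "cmod (1 - cnj a * z) \<ge> 1 - A * r" using Az by linarith
    then have pos: "cmod (1 - cnj a * z) > 0" using Ar1 by linarith
    have "cmod (1 - cnj a * z) \<le> 1 + A * cmod z"
      using norm_triangle_ineq4[of 1 "cnj a * z"] by (simp add: norm_mult A_def)
    then have hi: "cmod (1 - cnj a * z) \<le> 2" using Az Ar1 by linarith
    have num: "cmod (a - z) \<le> A + r" using norm_triangle_ineq4[of a z] z by (simp add: A_def)
    show "cmod (disc_auto a z) \<le> M"
      unfolding disc_auto_def M_def norm_divide using num lo pos Ar1 A r1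
      by (intro frac_le) auto
    have "Re (cnj a * z) \<le> A * r" using Re_le_cmod_mult[of a z] Az by (simp add: A_def)
    moreover have "(1 + A)\<^sup>2 / 2 + (1 - A)\<^sup>2 / 2 = 1 + A\<^sup>2" by (simp add: power2_eq_square field_simps)
    ultimately have "1 + A\<^sup>2 - 2 * Re (cnj a * z) \<ge> (1 - A)\<^sup>2 / 2"
      using Ar by linarith
    moreover have "1 - A\<^sup>2 > 0" using A by (simp add: power_less_one_iff abs_square_less_1 less_imp_le)
    ultimately have "(1 - A\<^sup>2) * (1 + A\<^sup>2 - 2 * Re (cnj a * z)) \<ge> d1"
      unfolding d1_def by (intro mult_left_mono) auto
    then have key: "A\<^sup>2 * (cmod (a - z))\<^sup>2 \<le> (cmod (1 - cnj a * z))\<^sup>2 - d1"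
      using G2[of a z] by (simp add: A_def)
    define N where "N = (cmod (1 - cnj a * z))\<^sup>2"
    have N: "0 < N" "N \<le> 4" using pos hi unfolding N_def by (auto intro: power_mono[of _ 2 2, simplified])
    have sq: "(cmod (cnj a * disc_auto a z))\<^sup>2 = A\<^sup>2 * (cmod (a - z))\<^sup>2 / N"
      unfolding disc_auto_def N_def by (simp add: norm_mult norm_divide power_mult_distrib power_divide A_def)
    also have "\<dots> \<le> (N - d1) / N" using key N by (intro divide_right_mono) (auto simp: N_def)
    also have "\<dots> = 1 - d1 / N" using N by (simp add: field_simps)
    also have "\<dots> \<le> 1 - d1 / 4"
    proof -
      have "d1 / 4 \<le> d1 / N" using N d1 by (intro divide_left_mono) auto
      then show ?thesis by linarith
    qed
    finally have "(cmod (cnj a * disc_auto a z))\<^sup>2 \<le> 1 - d1 / 4" .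
    moreover have "1 - d1 / 4 \<le> q\<^sup>2" unfolding q_def using d1 by (simp add: power2_eq_square algebra_simps)
    ultimately have "(cmod (cnj a * disc_auto a z))\<^sup>2 \<le> q\<^sup>2" by linarith
    moreover have "q \<ge> 0" using d1 by (simp add: q_def)
    ultimately show "cmod (cnj a * disc_auto a z) \<le> q" using power2_le_imp_le by blast
  qed
  show ?thesis by (rule that[OF r1 r2[unfolded A_def] q bnd])
qed

definition phk :: "complex \<Rightarrow> complex \<Rightarrow> nat \<Rightarrow> complex \<Rightarrow> complex" where
  "phk al lam k z = disc_auto al (lam ^ k * disc_auto al z)"

definition rho :: "complex \<Rightarrow> real" where
  "rho al = (1 + (cmod al)\<^sup>2) / (2 * cmod al)"

context
  fixes al lam :: complex
  assumes al: "0 < cmod al" "cmod al < 1" and lam: "0 < cmod lam" "cmod lam < 1"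
begin

lemma rho_gt1: "1 < rho al"
proof -
  obtain r M q where "1 < r" "r < (1 + (cmod al)\<^sup>2) / (2 * cmod al)"
    using psi_bounds[OF al] by blast
  then show ?thesis by (simp add: rho_def)
qed

lemma in_rho: "z \<in> ball 0 (rho al) \<Longrightarrow> 1 - cnj al * z \<noteq> 0 \<and> cmod (cnj al * disc_auto al z) < 1"
  using psi_big_ball[OF al, of z] by (simp add: rho_def)

lemma hol_psi: "disc_auto al holomorphic_on ball 0 (rho al)"
proof -
  have "(\<lambda>z. (al - z) / (1 - cnj al * z)) holomorphic_on ball 0 (rho al)"
    using in_rho by (intro holomorphic_intros) auto
  then show ?thesis by (simp add: disc_auto_def[abs_def])
qed

lemma den2: "z \<in> ball 0 (rho al) \<Longrightarrow> 1 - cnj al * (lam ^ k * disc_auto al z) \<noteq> 0"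
proof
  assume z: "z \<in> ball 0 (rho al)" and e: "1 - cnj al * (lam ^ k * disc_auto al z) = 0"
  have "cmod (cnj al * (lam ^ k * disc_auto al z)) = cmod lam ^ k * cmod (cnj al * disc_auto al z)"
    by (simp add: norm_mult norm_power)
  also have "\<dots> < 1"
  proof -
    have "cmod lam ^ k \<le> 1" using lam by (simp add: power_le_one)
    moreover have "cmod (cnj al * disc_auto al z) < 1" using in_rho[OF z] by simp
    moreover have "cmod lam ^ k * cmod (cnj al * disc_auto al z) \<le> cmod (cnj al * disc_auto al z)"
      using calculation(1) by (intro mult_left_le_one_le) auto
    ultimately show ?thesis by linarith
  qed
  finally have "cmod (cnj al * (lam ^ k * disc_auto al z)) < 1" .
  moreover have "cnj al * (lam ^ k * disc_auto al z) = 1" using e by simp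
  ultimately show False by simp
qed

lemma hol_phk: "(\<lambda>z. (phk al lam k z) ^ n) holomorphic_on ball 0 (rho al)"
proof -
  have "(\<lambda>z. ((al - lam ^ k * ((al - z) / (1 - cnj al * z))) / (1 - cnj al * (lam ^ k * ((al - z) / (1 - cnj al * z))))) ^ n) holomorphic_on ball 0 (rho al)"
    using in_rho den2 unfolding disc_auto_def by (intro holomorphic_intros) auto
  then show ?thesis by (simp add: phk_def disc_auto_def[abs_def])
qed

lemma psi_in_ball: "z \<in> ball 0 1 \<Longrightarrow> disc_auto al z \<in> ball 0 1"
  using psi_ball[of z al] al by simp

lemma lam_psi_in_ball: "z \<in> ball 0 1 \<Longrightarrow> lam * disc_auto al z \<in> ball 0 1"
proof -
  assume "z \<in> ball 0 1"
  then have "cmod (disc_auto al z) < 1" using psi_in_ball by simp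
  moreover have "cmod lam * cmod (disc_auto al z) \<le> cmod (disc_auto al z)" using lam
    by (intro mult_left_le_one_le) auto
  ultimately have "cmod lam * cmod (disc_auto al z) < 1" by linarith
  then show ?thesis by (simp add: norm_mult)
qed

lemma inv_ball: "z \<in> ball 0 1 \<Longrightarrow> disc_auto al (disc_auto al z) = z"
proof -
  assume z: "z \<in> ball 0 1"
  have "cmod al * cmod z \<le> cmod z" using al by (intro mult_left_le_one_le) auto
  then have "cmod (cnj al * z) < 1" using z by (simp add: norm_mult)
  then have "1 - cnj al * z \<noteq> 0" by auto
  then show ?thesis using al by (intro psi_inv) auto
qed

abbreviation "phi \<equiv> (\<lambda>z. disc_auto al (lam * disc_auto al z))"

lemma phi_ball: "z \<in> ball 0 1 \<Longrightarrow> phi z \<in> ball 0 1"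
  using psi_in_ball lam_psi_in_ball by blast

lemma psi_phi: "z \<in> ball 0 1 \<Longrightarrow> disc_auto al (phi z) = lam * disc_auto al z"
  using inv_ball lam_psi_in_ball by blast

lemma phk_phi: "z \<in> ball 0 1 \<Longrightarrow> phk al lam k (phi z) = phk al lam (Suc k) z"
  unfolding phk_def using psi_phi by (simp add: mult_ac)

lemma T_phk: "comp_op phi (rst (\<lambda>z. (phk al lam k z) ^ n)) = rst (\<lambda>z. (phk al lam (Suc k) z) ^ n)"
  unfolding comp_op_def rst_def using phi_ball phk_phi by (auto intro!: ext)

lemma phk0: "rst (\<lambda>z. (phk al lam 0 z) ^ n) = rst (\<lambda>z. z ^ n)"
  unfolding rst_def phk_def using inv_ball by (auto intro!: ext)

lemma T_one: "comp_op phi (rst (\<lambda>z. 1)) = rst (\<lambda>z. 1)"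
  unfolding comp_op_def rst_def using phi_ball by (auto intro!: ext)

lemma T_psi: "comp_op phi (rst (disc_auto al)) = (\<lambda>z. lam * rst (disc_auto al) z)"
  unfolding comp_op_def rst_def using phi_ball psi_phi by (auto intro!: ext)

lemma mem_phk: "rst (\<lambda>z. (phk al lam k z) ^ n) \<in> A2 (real b)"
  by (rule rst_in_A2[OF hol_phk rho_gt1])

lemma mem_psi: "rst (disc_auto al) \<in> A2 (real b)"
  by (rule rst_in_A2[OF hol_psi rho_gt1])

lemma mem_one: "rst (\<lambda>z. 1) \<in> A2 (real b)"
  by (rule rst_in_A2[of _ 2]) auto

lemma mem_pow: "rst (\<lambda>z. z ^ n) \<in> A2 (real b)"
  by (rule rst_in_A2[of _ 2]) (auto intro: holomorphic_intros)

end

lemma vanish: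
  fixes X :: complex and l C :: real
  assumes "0 \<le> l" "l < 1" "\<And>k. cmod X \<le> C * l ^ k"
  shows "X = 0"
proof (rule ccontr)
  assume "X \<noteq> 0"
  then have X: "cmod X > 0" by simp
  have C: "C > 0"
  proof (rule ccontr)
    assume "\<not> C > 0"
    then have "C * l ^ 0 \<le> 0" by simp
    then show False using assms(3)[of 0] X by linarith
  qed
  obtain k where "l ^ k < cmod X / C" using real_arch_pow_inv[of "cmod X / C" l] X C assms(2) by auto
  then have "C * l ^ k < cmod X" using C by (simp add: field_simps)
  then show False using assms(3)[of k] by linarith
qed

lemma poly0:
  fixes x d :: complex
  assumes "cmod x \<le> 1" "cmod d \<le> D"
  shows "cmod ((x + d) ^ n - x ^ n) \<le> real n * (1 + D) ^ n * cmod d"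
proof (induction n)
  case 0 then show ?case by simp
next
  case (Suc n)
  have D: "0 \<le> D" using assms(2) norm_ge_zero order_trans by blast
  have xd: "cmod (x + d) \<le> 1 + D" using assms norm_triangle_ineq[of x d] by linarith
  have xn: "cmod (x ^ n) \<le> 1" using assms(1) by (simp add: norm_power power_le_one)
  have "(x + d) ^ Suc n - x ^ Suc n = (x + d) * ((x + d) ^ n - x ^ n) + d * x ^ n"
    by (simp add: algebra_simps)
  then have "cmod ((x + d) ^ Suc n - x ^ Suc n) \<le> cmod (x + d) * cmod ((x + d) ^ n - x ^ n) + cmod d * cmod (x ^ n)"
    using norm_triangle_ineq[of "(x + d) * ((x + d) ^ n - x ^ n)" "d * x ^ n"] by (simp add: norm_mult)
  also have "\<dots> \<le> (1 + D) * (real n * (1 + D) ^ n * cmod d) + cmod d * 1"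
    using xd Suc.IH xn D by (intro add_mono mult_mono) auto
  also have "\<dots> \<le> real (Suc n) * (1 + D) ^ Suc n * cmod d"
  proof -
    have "1 \<le> (1 + D) ^ Suc n" by (rule one_le_power) (use D in simp)
    then have "cmod d * 1 \<le> cmod d * (1 + D) ^ Suc n" by (intro mult_left_mono) auto
    then show ?thesis by (simp add: algebra_simps)
  qed
  finally show ?case .
qed

lemma poly1:
  fixes x d :: complex
  assumes "cmod x \<le> 1" "cmod d \<le> D"
  shows "cmod ((x + d) ^ n - x ^ n - of_nat n * x ^ (n - 1) * d) \<le> real n ^ 2 * (1 + D) ^ n * (cmod d)\<^sup>2"
proof (induction n)
  case 0 then show ?case by simp
next
  case (Suc n)
  have D: "0 \<le> D" using assms(2) norm_ge_zero order_trans by blast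
  have xd: "cmod (x + d) \<le> 1 + D" using assms norm_triangle_ineq[of x d] by linarith
  have xn1: "cmod (x ^ (n - 1)) \<le> 1" using assms(1) by (simp add: norm_power power_le_one)
  define e where "e = (x + d) ^ n - x ^ n - of_nat n * x ^ (n - 1) * d"
  have xx: "of_nat n * x ^ (n - 1) * x = of_nat n * x ^ n"
    by (cases n) auto
  have "(x + d) ^ Suc n - x ^ Suc n - of_nat (Suc n) * x ^ (Suc n - 1) * d
      = (x + d) * e + of_nat n * x ^ (n - 1) * d * d"
    unfolding e_def using xx by (simp add: algebra_simps)
  then have "cmod ((x + d) ^ Suc n - x ^ Suc n - of_nat (Suc n) * x ^ (Suc n - 1) * d)
      \<le> cmod (x + d) * cmod e + real n * cmod (x ^ (n - 1)) * (cmod d)\<^sup>2"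
    using norm_triangle_ineq[of "(x + d) * e" "of_nat n * x ^ (n - 1) * d * d"] by (simp add: norm_mult power2_eq_square mult_ac)
  also have "\<dots> \<le> (1 + D) * (real n ^ 2 * (1 + D) ^ n * (cmod d)\<^sup>2) + real n * 1 * (cmod d)\<^sup>2"
    using xd Suc.IH xn1 D unfolding e_def by (intro add_mono mult_mono) auto
  also have "\<dots> \<le> real (Suc n) ^ 2 * (1 + D) ^ Suc n * (cmod d)\<^sup>2"
  proof -
    have p: "1 \<le> (1 + D) ^ Suc n" by (rule one_le_power) (use D in simp)
    have "real n ^ 2 * (1 + D) ^ Suc n + real n \<le> real (Suc n) ^ 2 * (1 + D) ^ Suc n"
    proof -
      have "real n * 1 \<le> real n * (1 + D) ^ Suc n" using p by (intro mult_left_mono) auto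
      moreover have "real (Suc n) ^ 2 = real n ^ 2 + 2 * real n + 1" by (simp add: power2_eq_square algebra_simps)
      ultimately show ?thesis using p by (simp add: algebra_simps)
    qed
    then have "(real n ^ 2 * (1 + D) ^ Suc n + real n) * (cmod d)\<^sup>2 \<le> real (Suc n) ^ 2 * (1 + D) ^ Suc n * (cmod d)\<^sup>2"
      by (intro mult_right_mono) auto
    then show ?thesis by (simp add: algebra_simps)
  qed
  finally show ?case .
qed

context
  fixes al lam :: complex and r M q :: real
  assumes al: "0 < cmod al" "cmod al < 1" and lam: "0 < cmod lam" "cmod lam < 1"
    and rq: "1 < r" "r < rho al" "q < 1"
    and bd: "\<And>z. cmod z \<le> r \<Longrightarrow> cmod (disc_auto al z) \<le> M \<and> cmod (cnj al * disc_auto al z) \<le> q"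
begin

lemma M0: "0 \<le> M"
proof -
  have "cmod (0::complex) \<le> r" using rq by simp
  then have "cmod (disc_auto al 0) \<le> M" using bd by blast
  then show ?thesis using norm_ge_zero[of "disc_auto al 0"] by linarith
qed
lemma q0: "0 \<le> q"
proof -
  have "cmod (0::complex) \<le> r" using rq by simp
  then have "cmod (cnj al * disc_auto al 0) \<le> q" using bd by blast
  then show ?thesis using norm_ge_zero[of "cnj al * disc_auto al 0"] by linarith
qed

lemma da_minus: "1 - cnj a * u \<noteq> 0 \<Longrightarrow> disc_auto a u - a = (a * cnj a - 1) * u / (1 - cnj a * u)"
  unfolding disc_auto_def by (simp add: field_simps)

lemma lamk: "cmod lam ^ k \<le> 1" using lam by (simp add: power_le_one)

lemma zeta_bounds:
  assumes z: "cmod z \<le> r"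
  shows "cmod (lam ^ k * disc_auto al z) \<le> cmod lam ^ k * M"
    and "cmod (cnj al * (lam ^ k * disc_auto al z)) \<le> q"
    and "cmod (1 - cnj al * (lam ^ k * disc_auto al z)) \<ge> 1 - q"
proof -
  show "cmod (lam ^ k * disc_auto al z) \<le> cmod lam ^ k * M"
    using bd[OF z] by (simp add: norm_mult norm_power mult_left_mono)
  have "cmod (cnj al * (lam ^ k * disc_auto al z)) = cmod lam ^ k * cmod (cnj al * disc_auto al z)"
    by (simp add: norm_mult norm_power)
  also have "\<dots> \<le> 1 * q" using bd[OF z] lamk[of k] q0 by (intro mult_mono) auto
  finally show q: "cmod (cnj al * (lam ^ k * disc_auto al z)) \<le> q" by simp
  show "cmod (1 - cnj al * (lam ^ k * disc_auto al z)) \<ge> 1 - q"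
    using norm_triangle_ineq2[of 1 "cnj al * (lam ^ k * disc_auto al z)"] q by simp
qed

definition "KK = 2 * M / (1 - q)"

lemma KK0: "0 \<le> KK" using M0 rq by (simp add: KK_def)

lemma alal: "cmod (al * cnj al - 1) \<le> 2"
proof -
  have "cmod (al * cnj al - 1) \<le> cmod (al * cnj al) + 1" using norm_triangle_ineq4[of "al * cnj al" 1] by simp
  moreover have "cmod (al * cnj al) \<le> 1" using al by (simp add: norm_mult) (metis less_imp_le mult_le_one norm_ge_zero)
  ultimately show ?thesis by simp
qed

lemma phk_eq:
  assumes z: "cmod z \<le> r"
  shows "phk al lam k z - al = (al * cnj al - 1) * (lam ^ k * disc_auto al z) / (1 - cnj al * (lam ^ k * disc_auto al z))"
proof -
  define u where "u = lam ^ k * disc_auto al z"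
  have "cmod (1 - cnj al * u) > 0" using zeta_bounds(3)[OF z, of k] rq unfolding u_def by linarith
  then have "1 - cnj al * u \<noteq> 0" by auto
  then show ?thesis unfolding phk_def u_def[symmetric] by (rule da_minus)
qed

lemma S0:
  assumes z: "cmod z \<le> r"
  shows "cmod (phk al lam k z - al) \<le> KK * cmod lam ^ k"
proof -
  define u where "u = lam ^ k * disc_auto al z"
  have d: "cmod (1 - cnj al * u) \<ge> 1 - q" "1 - q > 0" using zeta_bounds(3)[OF z, of k] rq unfolding u_def by auto
  have "cmod (phk al lam k z - al) = cmod (al * cnj al - 1) * cmod u / cmod (1 - cnj al * u)"
    unfolding phk_eq[OF z] u_def by (simp add: norm_mult norm_divide)
  also have "\<dots> \<le> (2 * (cmod lam ^ k * M)) / (1 - q)"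
    using alal zeta_bounds(1)[OF z, of k] d M0 by (intro frac_le mult_mono) (auto simp: u_def)
  also have "\<dots> = KK * cmod lam ^ k" by (simp add: KK_def)
  finally show ?thesis .
qed

lemma S1:
  assumes z: "cmod z \<le> r"
  shows "cmod (phk al lam k z - al - (al * cnj al - 1) * (lam ^ k * disc_auto al z)) \<le> 2 * M\<^sup>2 / (1 - q) * (cmod lam ^ k)\<^sup>2"
proof -
  define u where "u = lam ^ k * disc_auto al z"
  have d: "cmod (1 - cnj al * u) \<ge> 1 - q" "1 - q > 0" using zeta_bounds(3)[OF z, of k] rq unfolding u_def by auto
  then have nz: "1 - cnj al * u \<noteq> 0" by auto
  have "phk al lam k z - al - (al * cnj al - 1) * u = (al * cnj al - 1) * u * (cnj al * u) / (1 - cnj al * u)"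
    unfolding phk_eq[OF z] u_def[symmetric] using nz by (simp add: field_simps)
  then have "cmod (phk al lam k z - al - (al * cnj al - 1) * u) = cmod (al * cnj al - 1) * cmod u * (cmod al * cmod u) / cmod (1 - cnj al * u)"
    by (simp add: norm_mult norm_divide)
  also have "\<dots> \<le> (2 * (cmod lam ^ k * M) * (1 * (cmod lam ^ k * M))) / (1 - q)"
    using alal zeta_bounds(1)[OF z, of k] d al M0 by (intro frac_le mult_mono) (auto simp: u_def)
  also have "\<dots> = 2 * M\<^sup>2 / (1 - q) * (cmod lam ^ k)\<^sup>2" by (simp add: power2_eq_square)
  finally show ?thesis unfolding u_def .
qed

lemma P0:
  assumes z: "cmod z \<le> r"
  shows "cmod ((phk al lam k z) ^ n - al ^ n) \<le> real n * (1 + KK) ^ n * KK * cmod lam ^ k"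
proof -
  have d: "cmod (phk al lam k z - al) \<le> KK" using S0[OF z, of k] lamk[of k] KK0
    by (meson mult_left_le order_trans)
  have "cmod ((al + (phk al lam k z - al)) ^ n - al ^ n) \<le> real n * (1 + KK) ^ n * cmod (phk al lam k z - al)"
    by (rule poly0) (use al d in auto)
  also have "\<dots> \<le> real n * (1 + KK) ^ n * (KK * cmod lam ^ k)"
    using S0[OF z, of k] KK0 by (intro mult_left_mono) auto
  finally show ?thesis by (simp add: mult_ac)
qed

lemma P1:
  assumes z: "cmod z \<le> r"
  shows "cmod ((phk al lam k z) ^ n - al ^ n - lam ^ k * (of_nat n * al ^ (n - 1) * (al * cnj al - 1)) * disc_auto al z)
    \<le> (real n ^ 2 * (1 + KK) ^ n * KK\<^sup>2 + real n * (2 * M\<^sup>2 / (1 - q))) * (cmod lam ^ k)\<^sup>2"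
proof -
  define d where "d = phk al lam k z - al"
  define u where "u = lam ^ k * disc_auto al z"
  have dK: "cmod d \<le> KK" using S0[OF z, of k] lamk[of k] KK0 unfolding d_def
    by (meson mult_left_le order_trans)
  have e: "(phk al lam k z) ^ n - al ^ n - lam ^ k * (of_nat n * al ^ (n - 1) * (al * cnj al - 1)) * disc_auto al z
    = ((al + d) ^ n - al ^ n - of_nat n * al ^ (n - 1) * d) + of_nat n * al ^ (n - 1) * (d - (al * cnj al - 1) * u)"
    unfolding d_def u_def by (simp add: algebra_simps)
  have t1: "cmod ((al + d) ^ n - al ^ n - of_nat n * al ^ (n - 1) * d) \<le> real n ^ 2 * (1 + KK) ^ n * (cmod d)\<^sup>2"
    by (rule poly1) (use al dK in auto)
  also have "\<dots> \<le> real n ^ 2 * (1 + KK) ^ n * (KK * cmod lam ^ k)\<^sup>2"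
    using S0[OF z, of k] KK0 unfolding d_def by (intro mult_left_mono power_mono) auto
  finally have t1': "cmod ((al + d) ^ n - al ^ n - of_nat n * al ^ (n - 1) * d) \<le> real n ^ 2 * (1 + KK) ^ n * KK\<^sup>2 * (cmod lam ^ k)\<^sup>2"
    by (simp add: power_mult_distrib mult_ac)
  have aln: "cmod (al ^ (n - 1)) \<le> 1" using al by (simp add: norm_power power_le_one)
  have "cmod (of_nat n * al ^ (n - 1) * (d - (al * cnj al - 1) * u)) = real n * cmod (al ^ (n - 1)) * cmod (d - (al * cnj al - 1) * u)"
    by (simp add: norm_mult)
  also have "\<dots> \<le> real n * 1 * (2 * M\<^sup>2 / (1 - q) * (cmod lam ^ k)\<^sup>2)"
    using aln S1[OF z, of k] unfolding d_def u_def by (intro mult_mono) auto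
  finally have t2: "cmod (of_nat n * al ^ (n - 1) * (d - (al * cnj al - 1) * u)) \<le> real n * (2 * M\<^sup>2 / (1 - q)) * (cmod lam ^ k)\<^sup>2"
    by simp
  show ?thesis unfolding e using norm_triangle_ineq[of "(al + d) ^ n - al ^ n - of_nat n * al ^ (n - 1) * d"
      "of_nat n * al ^ (n - 1) * (d - (al * cnj al - 1) * u)"] t1' t2
    by (simp add: algebra_simps)
qed

end

lemma tc_const: "taylor_coeff (\<lambda>z. c) m = (if m = 0 then c else 0)"
  unfolding taylor_coeff_def by simp

context
  fixes al lam :: complex and b :: nat
  assumes al: "0 < cmod al" "cmod al < 1" and lam: "0 < cmod lam" "cmod lam < 1"
begin

lemma zero_in_rho: "(0::complex) \<in> ball 0 (rho al)" using rho_gt1[OF al lam] by simp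

lemma ip_phk_sub:
  assumes w: "w \<in> A2 (real b)"
  shows "A2_inner (real b) (rst (\<lambda>z. (phk al lam k z) ^ n - al ^ n)) w
       = A2_inner (real b) (rst (\<lambda>z. (phk al lam k z) ^ n)) w - al ^ n * A2_inner (real b) (rst (\<lambda>z. 1)) w"
proof -
  have "taylor_coeff (rst (\<lambda>z. (phk al lam k z) ^ n - al ^ n)) m
      = 1 * taylor_coeff (rst (\<lambda>z. (phk al lam k z) ^ n)) m + (- (al ^ n)) * taylor_coeff (rst (\<lambda>z. 1)) m" for m
    unfolding tc_rst
    by (subst tc_diff[OF hol_phk[OF al lam] holomorphic_on_const open_ball zero_in_rho]) (simp add: tc_const)
  from ip_lin[OF mem_phk[OF al lam] mem_one[OF al lam] w this] show ?thesis by simp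
qed

lemma W0:
  assumes w: "w \<in> A2 (real b)"
    and inv: "\<And>f. f \<in> A2 (real b) \<Longrightarrow> A2_inner (real b) (comp_op (\<lambda>z. disc_auto al (lam * disc_auto al z)) f) w = A2_inner (real b) f w"
  shows "A2_inner (real b) (rst (\<lambda>z. z ^ n)) w = al ^ n * A2_inner (real b) (rst (\<lambda>z. 1)) w"
proof -
  obtain r M q where r1: "1 < r" and r2: "r < rho al" and q1: "q < 1"
    and bd: "\<And>z. cmod z \<le> r \<Longrightarrow> cmod (disc_auto al z) \<le> M \<and> cmod (cnj al * disc_auto al z) \<le> q"
    using psi_bounds[OF al] unfolding rho_def by metis
  have it: "A2_inner (real b) (rst (\<lambda>z. (phk al lam k z) ^ n)) w = A2_inner (real b) (rst (\<lambda>z. z ^ n)) w" for k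
  proof (induction k)
    case 0 then show ?case by (simp add: phk0[OF al lam])
  next
    case (Suc k)
    have "A2_inner (real b) (rst (\<lambda>z. (phk al lam (Suc k) z) ^ n)) w
        = A2_inner (real b) (comp_op (\<lambda>z. disc_auto al (lam * disc_auto al z)) (rst (\<lambda>z. (phk al lam k z) ^ n))) w"
      by (simp add: T_phk[OF al lam])
    also have "\<dots> = A2_inner (real b) (rst (\<lambda>z. (phk al lam k z) ^ n)) w"
      by (rule inv[OF mem_phk[OF al lam]])
    finally show ?case using Suc by simp
  qed
  define X where "X = A2_inner (real b) (rst (\<lambda>z. z ^ n)) w - al ^ n * A2_inner (real b) (rst (\<lambda>z. 1)) w"
  define C where "C = real n * (1 + KK M q) ^ n * KK M q"
  have "cmod X \<le> (C * Om b r w) * cmod lam ^ k" for k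
  proof -
    have "X = A2_inner (real b) (rst (\<lambda>z. (phk al lam k z) ^ n - al ^ n)) w"
      unfolding X_def ip_phk_sub[OF w] it ..
    also have "cmod \<dots> \<le> (C * cmod lam ^ k) * Om b r w"
    proof (rule ip_bound[OF _ r1 r2 _ w])
      show "(\<lambda>z. phk al lam k z ^ n - al ^ n) holomorphic_on ball 0 (rho al)"
        by (intro holomorphic_intros hol_phk[OF al lam])
      fix z :: complex assume "cmod z = r"
      then show "cmod (phk al lam k z ^ n - al ^ n) \<le> C * cmod lam ^ k"
        using P0[OF al lam r1 r2 q1 bd, of z k n] by (simp add: C_def)
    qed
    finally show ?thesis by (simp add: mult_ac)
  qed
  then have "X = 0" using lam by (intro vanish[of "cmod lam" X]) auto
  then show ?thesis by (simp add: X_def)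
qed


lemma W1:
  assumes w: "w \<in> A2 (real b)"
    and inv: "\<And>f. f \<in> A2 (real b) \<Longrightarrow> A2_inner (real b) (comp_op (\<lambda>z. disc_auto al (lam * disc_auto al z)) f) w = lam * A2_inner (real b) f w"
  shows "A2_inner (real b) (rst (\<lambda>z. z ^ n)) w = of_nat n * al ^ (n - 1) * (al * cnj al - 1) * A2_inner (real b) (rst (disc_auto al)) w"
proof -
  obtain r M q where r1: "1 < r" and r2: "r < rho al" and q1: "q < 1"
    and bd: "\<And>z. cmod z \<le> r \<Longrightarrow> cmod (disc_auto al z) \<le> M \<and> cmod (cnj al * disc_auto al z) \<le> q"
    using psi_bounds[OF al] unfolding rho_def by metis
  have one0: "A2_inner (real b) (rst (\<lambda>z. 1)) w = 0"
  proof -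
    have "A2_inner (real b) (rst (\<lambda>z. 1)) w = lam * A2_inner (real b) (rst (\<lambda>z. 1)) w"
      using inv[OF mem_one[OF al lam]] by (simp add: T_one[OF al lam])
    moreover have "lam \<noteq> 1" using lam by auto
    ultimately show ?thesis by (metis mult_cancel_right2)
  qed
  have it: "A2_inner (real b) (rst (\<lambda>z. (phk al lam k z) ^ n)) w = lam ^ k * A2_inner (real b) (rst (\<lambda>z. z ^ n)) w" for k
  proof (induction k)
    case 0 then show ?case by (simp add: phk0[OF al lam])
  next
    case (Suc k)
    have "A2_inner (real b) (rst (\<lambda>z. (phk al lam (Suc k) z) ^ n)) w
        = A2_inner (real b) (comp_op (\<lambda>z. disc_auto al (lam * disc_auto al z)) (rst (\<lambda>z. (phk al lam k z) ^ n))) w"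
      by (simp add: T_phk[OF al lam])
    also have "\<dots> = lam * A2_inner (real b) (rst (\<lambda>z. (phk al lam k z) ^ n)) w"
      by (rule inv[OF mem_phk[OF al lam]])
    finally show ?case using Suc by simp
  qed
  define cn where "cn = of_nat n * al ^ (n - 1) * (al * cnj al - 1)"
  define X where "X = A2_inner (real b) (rst (\<lambda>z. z ^ n)) w - cn * A2_inner (real b) (rst (disc_auto al)) w"
  define C where "C = real n ^ 2 * (1 + KK M q) ^ n * (KK M q)\<^sup>2 + real n * (2 * M\<^sup>2 / (1 - q))"
  have "cmod X \<le> (C * Om b r w) * cmod lam ^ k" for k
  proof -
    have hol1: "(\<lambda>z. (phk al lam k z) ^ n - al ^ n) holomorphic_on ball 0 (rho al)"
      by (intro holomorphic_intros hol_phk[OF al lam])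
    have mem1: "rst (\<lambda>z. (phk al lam k z) ^ n - al ^ n) \<in> A2 (real b)"
      by (rule rst_in_A2[OF hol1 rho_gt1[OF al lam]])
    have "taylor_coeff (rst (\<lambda>z. ((phk al lam k z) ^ n - al ^ n) - lam ^ k * cn * disc_auto al z)) m
      = 1 * taylor_coeff (rst (\<lambda>z. (phk al lam k z) ^ n - al ^ n)) m + (- (lam ^ k * cn)) * taylor_coeff (rst (disc_auto al)) m" for m
      unfolding tc_rst
      by (subst tc_diff[OF hol1 _ open_ball zero_in_rho], intro holomorphic_intros hol_psi[OF al lam],
          subst tc_cmult[OF hol_psi[OF al lam] open_ball zero_in_rho]) simp
    from ip_lin[OF mem1 mem_psi[OF al lam] w this]
    have "A2_inner (real b) (rst (\<lambda>z. ((phk al lam k z) ^ n - al ^ n) - lam ^ k * cn * disc_auto al z)) w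
        = lam ^ k * X"
      unfolding ip_phk_sub[OF w] it one0 X_def by (simp add: algebra_simps)
    then have "lam ^ k * X = A2_inner (real b) (rst (\<lambda>z. ((phk al lam k z) ^ n - al ^ n) - lam ^ k * cn * disc_auto al z)) w" by simp
    also have "cmod \<dots> \<le> (C * (cmod lam ^ k)\<^sup>2) * Om b r w"
    proof (rule ip_bound[OF _ r1 r2 _ w])
      show "(\<lambda>z. ((phk al lam k z) ^ n - al ^ n) - lam ^ k * cn * disc_auto al z) holomorphic_on ball 0 (rho al)"
        by (intro holomorphic_intros hol_phk[OF al lam] hol_psi[OF al lam])
      fix z :: complex assume "cmod z = r"
      then show "cmod (((phk al lam k z) ^ n - al ^ n) - lam ^ k * cn * disc_auto al z) \<le> C * (cmod lam ^ k)\<^sup>2"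
        using P1[OF al lam r1 r2 q1 bd, of z k n] by (simp add: C_def cn_def mult_ac)
    qed
    finally have "cmod lam ^ k * cmod X \<le> cmod lam ^ k * ((C * Om b r w) * cmod lam ^ k)"
      by (simp add: norm_mult norm_power power2_eq_square mult_ac)
    moreover have "cmod lam ^ k > 0" using lam by simp
    ultimately show ?thesis by simp
  qed
  then have "X = 0" using lam by (intro vanish[of "cmod lam" X]) auto
  then show ?thesis by (simp add: X_def cn_def)
qed

end

lemma series_rel:
  fixes t :: real
  assumes P: "(\<lambda>n. t ^ n / wb b n) sums P"
    and Q: "(\<lambda>n. real n * t ^ (n - 1) / wb b n) sums Q"
    and R: "(\<lambda>n. (real n)\<^sup>2 * t ^ (n - 1) / wb b n) sums R"
  shows "Q = t * Q + (real b + 2) * P" "R = t * R + (real b + 3) * t * Q + (real b + 2) * P"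
proof -
  have tm: "real m * t ^ (m - 1) * t = real m * t ^ m" for m
    by (cases m) auto
  have rec: "real (Suc m) / wb b (Suc m) = (real m + real b + 2) / wb b m" for m
    using bw_rec[of m b] by (simp add: add.commute)
  have eQ: "(\<lambda>m. real (Suc m) * t ^ (Suc m - 1) / wb b (Suc m)) = (\<lambda>m. t * (real m * t ^ (m - 1) / wb b m) + (real b + 2) * (t ^ m / wb b m))"
  proof
    fix m
    have "real (Suc m) * t ^ (Suc m - 1) / wb b (Suc m) = t ^ m * (real (Suc m) / wb b (Suc m))" by simp
    also have "\<dots> = t ^ m * ((real m + real b + 2) / wb b m)" by (simp only: rec)
    also have "\<dots> = real m * t ^ m / wb b m + (real b + 2) * (t ^ m / wb b m)"
      using bw_pos[of b m] by (simp add: field_simps)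
    also have "real m * t ^ m / wb b m = t * (real m * t ^ (m - 1) / wb b m)" by (cases m) auto
    finally show "real (Suc m) * t ^ (Suc m - 1) / wb b (Suc m) = t * (real m * t ^ (m - 1) / wb b m) + (real b + 2) * (t ^ m / wb b m)" .
  qed
  have "(\<lambda>m. real (Suc m) * t ^ (Suc m - 1) / wb b (Suc m)) sums Q"
    using Q by (subst sums_Suc_iff) simp
  moreover have "(\<lambda>m. t * (real m * t ^ (m - 1) / wb b m) + (real b + 2) * (t ^ m / wb b m)) sums (t * Q + (real b + 2) * P)"
    by (intro sums_add sums_mult Q P)
  ultimately show "Q = t * Q + (real b + 2) * P" unfolding eQ using sums_unique2 by blast
  have eR: "(\<lambda>m. (real (Suc m))\<^sup>2 * t ^ (Suc m - 1) / wb b (Suc m)) = (\<lambda>m. t * ((real m)\<^sup>2 * t ^ (m - 1) / wb b m) + (real b + 3) * t * (real m * t ^ (m - 1) / wb b m) + (real b + 2) * (t ^ m / wb b m))"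
  proof
    fix m
    have tm2: "(real m)\<^sup>2 * t ^ (m - 1) * t = (real m)\<^sup>2 * t ^ m" by (cases m) auto
    have "(real (Suc m))\<^sup>2 * t ^ (Suc m - 1) / wb b (Suc m) = t ^ m * real (Suc m) * (real (Suc m) / wb b (Suc m))"
      by (simp add: power2_eq_square)
    also have "\<dots> = t ^ m * real (Suc m) * ((real m + real b + 2) / wb b m)" by (simp only: rec)
    also have "\<dots> = (real m)\<^sup>2 * t ^ m / wb b m + (real b + 3) * (real m * t ^ m / wb b m) + (real b + 2) * (t ^ m / wb b m)"
      using bw_pos[of b m] by (simp add: field_simps power2_eq_square)
    also have "(real m)\<^sup>2 * t ^ m / wb b m = t * ((real m)\<^sup>2 * t ^ (m - 1) / wb b m)" by (cases m) auto
    also have "(real b + 3) * (real m * t ^ m / wb b m) = (real b + 3) * t * (real m * t ^ (m - 1) / wb b m)" by (cases m) auto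
    finally show "(real (Suc m))\<^sup>2 * t ^ (Suc m - 1) / wb b (Suc m) = t * ((real m)\<^sup>2 * t ^ (m - 1) / wb b m) + (real b + 3) * t * (real m * t ^ (m - 1) / wb b m) + (real b + 2) * (t ^ m / wb b m)" .
  qed
  have "(\<lambda>m. (real (Suc m))\<^sup>2 * t ^ (Suc m - 1) / wb b (Suc m)) sums R"
    using R by (subst sums_Suc_iff) simp
  moreover have "(\<lambda>m. t * ((real m)\<^sup>2 * t ^ (m - 1) / wb b m) + (real b + 3) * t * (real m * t ^ (m - 1) / wb b m) + (real b + 2) * (t ^ m / wb b m)) sums (t * R + (real b + 3) * t * Q + (real b + 2) * P)"
    by (intro sums_add sums_mult Q P R)
  ultimately show "R = t * R + (real b + 3) * t * Q + (real b + 2) * P" unfolding eR using sums_unique2 by blast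
qed


lemma da_minus': "1 - cnj a * u \<noteq> 0 \<Longrightarrow> disc_auto a u - a = (a * cnj a - 1) * u / (1 - cnj a * u)"
  unfolding disc_auto_def by (simp add: field_simps)

lemma alcnj: "al * cnj al - 1 = of_real ((cmod al)\<^sup>2 - 1)"
  using complex_norm_square[of al] by simp

lemma tc_psi:
  assumes al: "cmod al < 1"
  shows "taylor_coeff (disc_auto al) n = (if n = 0 then al else (al * cnj al - 1) * cnj al ^ (n - 1))"
proof (rule tc_sums[of 1])
  fix u :: complex assume u: "u \<in> ball 0 1"
  have au: "cmod (cnj al * u) < 1"
  proof -
    have "cmod al * cmod u \<le> cmod u" using al by (intro mult_left_le_one_le) auto
    then show ?thesis using u by (simp add: norm_mult)
  qed
  then have nz: "1 - cnj al * u \<noteq> 0" by auto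
  have "(\<lambda>m. (al * cnj al - 1) * u * (cnj al * u) ^ m) sums ((al * cnj al - 1) * u * (1 / (1 - cnj al * u)))"
    by (intro sums_mult geometric_sums au)
  moreover have "(\<lambda>m. (al * cnj al - 1) * u * (cnj al * u) ^ m) = (\<lambda>m. (if Suc m = 0 then al else (al * cnj al - 1) * cnj al ^ (Suc m - 1)) * u ^ Suc m)"
    by (auto simp: power_mult_distrib mult_ac)
  ultimately have "(\<lambda>m. (if Suc m = 0 then al else (al * cnj al - 1) * cnj al ^ (Suc m - 1)) * u ^ Suc m) sums ((al * cnj al - 1) * u / (1 - cnj al * u))"
    by simp
  then have "(\<lambda>n. (if n = 0 then al else (al * cnj al - 1) * cnj al ^ (n - 1)) * u ^ n) sums ((al * cnj al - 1) * u / (1 - cnj al * u) + al)"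
    by (subst (asm) sums_Suc_iff) simp
  then show "(\<lambda>n. (if n = 0 then al else (al * cnj al - 1) * cnj al ^ (n - 1)) * u ^ n) sums disc_auto al u"
    using da_minus'[OF nz] by (simp add: algebra_simps)
qed simp

lemma N_val:
  assumes al: "0 < cmod al" "cmod al < 1"
  defines "t \<equiv> (cmod al)\<^sup>2"
  shows "\<exists>Nr. A2_inner (real b) (rst (disc_auto al)) (rst (disc_auto al)) = of_real Nr \<and> t \<le> Nr \<and> Nr < t + 1 / (real b + 2)"
proof -
  have t: "0 < t" "t < 1" using al unfolding t_def by (auto simp: power_less_one_iff abs_square_less_1)
  define c where "c n = (if n = 0 then al else (al * cnj al - 1) * cnj al ^ (n - 1))" for n
  have tcc: "taylor_coeff (rst (disc_auto al)) n = c n" for n unfolding tc_rst c_def by (rule tc_psi[OF al(2)])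
  define Nn where "Nn n = wb b n * (cmod (c n))\<^sup>2" for n
  have trm: "of_real (wb b n) * taylor_coeff (rst (disc_auto al)) n * cnj (taylor_coeff (rst (disc_auto al)) n) = of_real (Nn n)" for n
    unfolding tcc Nn_def using complex_norm_square[of "c n"] by (simp add: mult.assoc)
  have cm: "cmod (al * cnj al - 1) = 1 - t"
  proof -
    have "cmod (al * cnj al - 1) = \<bar>t - 1\<bar>" unfolding alcnj t_def by (simp only: norm_of_real)
    then show ?thesis using t by simp
  qed
  have NS: "Nn (Suc m) = wb b (Suc m) * ((1 - t)\<^sup>2 * t ^ m)" for m
    unfolding Nn_def c_def using cm by (simp add: norm_mult norm_power power_mult_distrib t_def power_mult[symmetric] mult.commute)
  have N0: "Nn 0 = t" unfolding Nn_def c_def t_def by (simp add: bw_0)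
  have le: "Nn (Suc m) \<le> (1 / (real b + 2)) * ((1 - t)\<^sup>2 * t ^ m)" for m
    unfolding NS using bw_le_w1[of b m] t by (intro mult_right_mono) auto
  have sg: "summable (\<lambda>m. (1 / (real b + 2)) * ((1 - t)\<^sup>2 * t ^ m))"
    using t by (intro summable_mult summable_geometric) auto
  have nn: "Nn (Suc m) \<ge> 0" for m unfolding NS using bw_pos[of b "Suc m"] t by simp
  have sN: "summable (\<lambda>m. Nn (Suc m))"
    by (rule summable_comparison_test'[OF sg, where N=0]) (use le nn in simp)
  define Nr where "Nr = (\<Sum>m. Nn (Suc m)) + t"
  have sums: "Nn sums Nr" unfolding Nr_def N0[symmetric] using sN by (subst sums_Suc_iff[symmetric]) (simp add: summable_sums)
  have "A2_inner (real b) (rst (disc_auto al)) (rst (disc_auto al)) = of_real Nr"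
    unfolding A2_inner_def trm using sums by (simp add: sums_of_real_iff[symmetric, where 'a=complex] sums_iff)
  moreover have "0 \<le> (\<Sum>m. Nn (Suc m))"
    using sN nn by (intro suminf_nonneg) auto
  moreover have "(\<Sum>m. Nn (Suc m)) < 1 / (real b + 2)"
  proof -
    have "(\<Sum>m. Nn (Suc m)) \<le> (\<Sum>m. (1 / (real b + 2)) * ((1 - t)\<^sup>2 * t ^ m))"
      by (rule suminf_le[OF le sN sg])
    also have "\<dots> = (1 / (real b + 2)) * ((1 - t)\<^sup>2 * (1 / (1 - t)))"
      using t by (subst suminf_mult, intro summable_mult summable_geometric, simp,
          subst suminf_mult, intro summable_geometric, simp, subst suminf_geometric) auto
    also have "\<dots> = (1 - t) / (real b + 2)" using t by (simp add: power2_eq_square)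
    also have "\<dots> < 1 / (real b + 2)" using t by (simp add: divide_strict_right_mono)
    finally show ?thesis .
  qed
  ultimately show ?thesis unfolding Nr_def by (intro exI[of _ Nr]) (auto simp: Nr_def)
qed

lemma tc_from_ip:
  assumes "of_real (wb b n) * cnj (taylor_coeff w n) = X"
  shows "taylor_coeff w n = cnj X / of_real (wb b n)"
proof -
  have "wb b n > 0" by (rule bw_pos)
  then show ?thesis using arg_cong[OF assms, of cnj] by (simp add: field_simps)
qed

lemma term_sq:
  assumes "taylor_coeff w n = cnj X / of_real (wb b n)"
  shows "of_real (wb b n) * taylor_coeff w n * cnj (taylor_coeff w n) = of_real ((cmod X)\<^sup>2 / wb b n)"
    and "wb b n * (cmod (taylor_coeff w n))\<^sup>2 = (cmod X)\<^sup>2 / wb b n"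
proof -
  have w: "wb b n > 0" by (rule bw_pos)
  have "of_real (wb b n) * taylor_coeff w n * cnj (taylor_coeff w n) = X * cnj X / of_real (wb b n)"
    unfolding assms using w by (simp add: field_simps power2_eq_square)
  also have "\<dots> = of_real ((cmod X)\<^sup>2 / wb b n)" using complex_norm_square[of X] by simp
  finally show "of_real (wb b n) * taylor_coeff w n * cnj (taylor_coeff w n) = of_real ((cmod X)\<^sup>2 / wb b n)" .
  show "wb b n * (cmod (taylor_coeff w n))\<^sup>2 = (cmod X)\<^sup>2 / wb b n"
    unfolding assms using w by (simp add: norm_divide power_divide power2_eq_square)
qed


theorem theorem5p2:
  fixes \<beta> :: nat and \<alpha> lam :: complex
  assumes "\<alpha> \<in> ball 0 1 - {0}" and "lam \<in> ball 0 1 - {0}"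
  shows "\<not> complex_symmetric_on (A2 (real \<beta>)) (A2_inner (real \<beta>))
            (comp_op (\<lambda>z. disc_auto \<alpha> (lam * disc_auto \<alpha> z)))"
proof
  define b where "b = \<beta>"
  define H where "H = A2 (real b)"
  define ip where "ip = A2_inner (real b)"
  define T where "T = comp_op (\<lambda>z. disc_auto \<alpha> (lam * disc_auto \<alpha> z))"
  have al: "0 < cmod \<alpha>" "cmod \<alpha> < 1" using assms(1) by auto
  have lam: "0 < cmod lam" "cmod lam < 1" using assms(2) by auto
  assume "complex_symmetric_on (A2 (real \<beta>)) (A2_inner (real \<beta>)) (comp_op (\<lambda>z. disc_auto \<alpha> (lam * disc_auto \<alpha> z)))"
  then obtain C S where conj: "conjugation_on H ip C" and adj: "is_adjoint_on H ip T S"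
      and rel: "\<And>f. f \<in> H \<Longrightarrow> C (T f) = S (C f)"
    unfolding complex_symmetric_on_def H_def ip_def T_def b_def by blast
  have CH: "\<And>f. f \<in> H \<Longrightarrow> C f \<in> H" using conj unfolding conjugation_on_def by blast
  have hom: "\<And>c f. f \<in> H \<Longrightarrow> C (\<lambda>z. c * f z) = (\<lambda>z. cnj c * C f z)" using conj unfolding conjugation_on_def by blast
  have iso: "\<And>f g. f \<in> H \<Longrightarrow> g \<in> H \<Longrightarrow> ip (C f) (C g) = ip g f" using conj unfolding conjugation_on_def by blast
  have adjE: "\<And>f g. f \<in> H \<Longrightarrow> g \<in> H \<Longrightarrow> ip (T f) g = ip f (S g)" using adj unfolding is_adjoint_on_def by blast
  define u0 where "u0 = rst (\<lambda>z. 1)"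
  define u1 where "u1 = rst (disc_auto \<alpha>)"
  have u0H: "u0 \<in> H" unfolding u0_def H_def by (rule mem_one[OF al lam])
  have u1H: "u1 \<in> H" unfolding u1_def H_def by (rule mem_psi[OF al lam])
  define w0 where "w0 = C u0"
  define w1 where "w1 = C u1"
  have w0H: "w0 \<in> H" unfolding w0_def by (rule CH[OF u0H])
  have w1H: "w1 \<in> H" unfolding w1_def by (rule CH[OF u1H])
  have Sw0: "S w0 = w0"
    using rel[OF u0H] unfolding w0_def u0_def T_def by (simp add: T_one[OF al lam])
  have Sw1: "S w1 = (\<lambda>z. cnj lam * w1 z)"
    using rel[OF u1H] hom[OF u1H, of lam] unfolding w1_def u1_def T_def by (simp add: T_psi[OF al lam])
  have inv0: "\<And>f. f \<in> A2 (real b) \<Longrightarrow> A2_inner (real b) (comp_op (\<lambda>z. disc_auto \<alpha> (lam * disc_auto \<alpha> z)) f) w0 = A2_inner (real b) f w0"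
    using adjE[OF _ w0H] Sw0 unfolding H_def ip_def T_def by simp
  have inv1: "\<And>f. f \<in> A2 (real b) \<Longrightarrow> A2_inner (real b) (comp_op (\<lambda>z. disc_auto \<alpha> (lam * disc_auto \<alpha> z)) f) w1 = lam * A2_inner (real b) f w1"
  proof -
    fix f assume f: "f \<in> A2 (real b)"
    have "A2_inner (real b) (comp_op (\<lambda>z. disc_auto \<alpha> (lam * disc_auto \<alpha> z)) f) w1 = ip f (S w1)"
      using adjE[OF _ w1H] f unfolding H_def ip_def T_def by simp
    also have "\<dots> = lam * A2_inner (real b) f w1"
      unfolding Sw1 ip_def using ip_scal2[OF f w1H[unfolded H_def], of "cnj lam"] by simp
    finally show "A2_inner (real b) (comp_op (\<lambda>z. disc_auto \<alpha> (lam * disc_auto \<alpha> z)) f) w1 = lam * A2_inner (real b) f w1" .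
  qed
  define \<kappa> where "\<kappa> = A2_inner (real b) u0 w0"
  define \<mu> where "\<mu> = (\<alpha> * cnj \<alpha> - 1) * A2_inner (real b) u1 w1"
  have co0: "A2_inner (real b) (rst (\<lambda>z. z ^ n)) w0 = \<alpha> ^ n * \<kappa>" for n
    using W0[OF al lam w0H[unfolded H_def] inv0] unfolding \<kappa>_def u0_def .
  have co1: "A2_inner (real b) (rst (\<lambda>z. z ^ n)) w1 = of_nat n * \<alpha> ^ (n - 1) * \<mu>" for n
    using W1[OF al lam w1H[unfolded H_def] inv1] unfolding \<mu>_def u1_def by (simp add: mult_ac)
  have tc0: "taylor_coeff w0 n = cnj (\<alpha> ^ n * \<kappa>) / of_real (wb b n)" for n
    by (rule tc_from_ip) (use co0[of n] ip_mono[OF w0H[unfolded H_def], of n] in simp)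
  have tc1: "taylor_coeff w1 n = cnj (of_nat n * \<alpha> ^ (n - 1) * \<mu>) / of_real (wb b n)" for n
    by (rule tc_from_ip) (use co1[of n] ip_mono[OF w1H[unfolded H_def], of n] in simp)
  define t where "t = (cmod \<alpha>)\<^sup>2"
  have t: "0 < t" "t < 1" using al unfolding t_def by (auto simp: power_less_one_iff abs_square_less_1)
  define Pn where "Pn n = t ^ n / wb b n" for n
  define Qn where "Qn n = real n * t ^ (n - 1) / wb b n" for n
  define Rn where "Rn n = (real n)\<^sup>2 * t ^ (n - 1) / wb b n" for n
  have X0: "(cmod (\<alpha> ^ n * \<kappa>))\<^sup>2 = (cmod \<kappa>)\<^sup>2 * t ^ n" for n
    unfolding t_def by (simp add: norm_mult norm_power power_mult_distrib power_mult[symmetric] mult.commute)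
  have X1: "(cmod (of_nat n * \<alpha> ^ (n - 1) * \<mu>))\<^sup>2 = (cmod \<mu>)\<^sup>2 * ((real n)\<^sup>2 * t ^ (n - 1))" for n
    unfolding t_def by (simp add: norm_mult norm_power power_mult_distrib power_mult[symmetric] mult_ac)
  have T00: "of_real (wb b n) * taylor_coeff w0 n * cnj (taylor_coeff w0 n) = of_real ((cmod \<kappa>)\<^sup>2 * Pn n)"
       "wb b n * (cmod (taylor_coeff w0 n))\<^sup>2 = (cmod \<kappa>)\<^sup>2 * Pn n" for n
    using term_sq[OF tc0[of n]] unfolding X0 Pn_def by simp_all
  have T11: "of_real (wb b n) * taylor_coeff w1 n * cnj (taylor_coeff w1 n) = of_real ((cmod \<mu>)\<^sup>2 * Rn n)"
       "wb b n * (cmod (taylor_coeff w1 n))\<^sup>2 = (cmod \<mu>)\<^sup>2 * Rn n" for n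
    using term_sq[OF tc1[of n]] unfolding X1 Rn_def by simp_all
  have T01: "of_real (wb b n) * taylor_coeff w0 n * cnj (taylor_coeff w1 n) = cnj \<kappa> * \<mu> * cnj \<alpha> * of_real (Qn n)" for n
  proof -
    have w: "wb b n > 0" by (rule bw_pos)
    have "of_real (wb b n) * taylor_coeff w0 n * cnj (taylor_coeff w1 n)
        = cnj \<kappa> * \<mu> * (of_nat n * (cnj \<alpha> ^ n * \<alpha> ^ (n - 1))) / of_real (wb b n)"
      unfolding tc0 tc1 using w by (simp add: field_simps power2_eq_square)
    also have "of_nat n * (cnj \<alpha> ^ n * \<alpha> ^ (n - 1)) = cnj \<alpha> * of_real (real n * t ^ (n - 1))"
    proof (cases n)
      case (Suc m)
      have "cnj \<alpha> ^ m * \<alpha> ^ m = of_real (t ^ m)"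
        unfolding t_def using complex_norm_square[of \<alpha>] by (simp add: power_mult_distrib[symmetric] mult.commute)
      then show ?thesis using Suc by (simp add: mult_ac)
    qed simp
    finally show ?thesis unfolding Qn_def using w by (simp add: field_simps)
  qed
  have tcu0: "taylor_coeff u0 n = (if n = 0 then 1 else 0)" for n
    unfolding u0_def tc_rst tc_const ..
  have ip00: "A2_inner (real b) w0 w0 = 1"
  proof -
    have "A2_inner (real b) w0 w0 = A2_inner (real b) u0 u0" using iso[OF u0H u0H] unfolding w0_def ip_def .
    also have "\<dots> = 1"
    proof -
      have e: "rst (\<lambda>z. z ^ 0) = u0" unfolding u0_def by simp
      have "A2_inner (real b) (rst (\<lambda>z. z ^ 0)) u0 = 1" using ip_mono[OF u0H[unfolded H_def], of 0] by (simp add: tcu0 bw_0)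
      then show ?thesis unfolding e .
    qed
    finally show ?thesis .
  qed
  obtain Nr where Nr: "A2_inner (real b) u1 u1 = of_real Nr" "t \<le> Nr" "Nr < t + 1 / (real b + 2)"
    using N_val[OF al, of b] unfolding u1_def t_def by blast
  have ip11: "A2_inner (real b) w1 w1 = of_real Nr"
    using iso[OF u1H u1H] Nr(1) unfolding w1_def ip_def by simp
  have ip01: "A2_inner (real b) w0 w1 = \<alpha>"
  proof -
    have "A2_inner (real b) w0 w1 = A2_inner (real b) u1 u0" using iso[OF u0H u1H] unfolding w0_def w1_def ip_def .
    also have "(\<lambda>n. of_real (wb b n) * taylor_coeff u1 n * cnj (taylor_coeff u0 n)) = (\<lambda>n. if n = 0 then of_real (wb b n) * taylor_coeff u1 n else 0)"
      by (auto simp: tcu0)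
    then have "A2_inner (real b) u1 u0 = of_real (wb b 0) * taylor_coeff u1 0"
      unfolding A2_inner_def using sums_single[of 0 "\<lambda>n. of_real (wb b n) * taylor_coeff u1 n"] by (simp add: sums_iff)
    also have "\<dots> = \<alpha>" unfolding u1_def tc_rst tc_psi[OF al(2)] by (simp add: bw_0)
    finally show ?thesis .
  qed
  have k0: "\<kappa> \<noteq> 0"
  proof
    assume "\<kappa> = 0"
    then have "A2_inner (real b) w0 w0 = 0" unfolding A2_inner_def T00(1) by simp
    then show False using ip00 by simp
  qed
  have m0: "\<mu> \<noteq> 0"
  proof
    assume "\<mu> = 0"
    then have "A2_inner (real b) w1 w1 = 0" unfolding A2_inner_def T11(1) by simp
    then show False using ip11 Nr(2) t by simp
  qed
  have sP: "summable Pn"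
    using A2_sum[OF w0H[unfolded H_def]] k0 unfolding T00(2) by simp
  have sR: "summable Rn"
    using A2_sum[OF w1H[unfolded H_def]] m0 unfolding T11(2) by simp
  have sQ: "summable Qn"
  proof (rule summable_comparison_test'[OF sR, where N=0])
    fix n :: nat
    have w: "wb b n > 0" by (rule bw_pos)
    have "real n \<le> (real n)\<^sup>2" by (cases n) (auto simp: power2_eq_square)
    then have "real n * (t ^ (n - 1) / wb b n) \<le> (real n)\<^sup>2 * (t ^ (n - 1) / wb b n)"
      using w t by (intro mult_right_mono) auto
    then show "norm (Qn n) \<le> Rn n" unfolding Qn_def Rn_def using w t by simp
  qed
  define P where "P = suminf Pn"
  define Q where "Q = suminf Qn"
  define R where "R = suminf Rn"
  have PQR: "Pn sums P" "Qn sums Q" "Rn sums R" using sP sQ sR unfolding P_def Q_def R_def by (simp_all add: summable_sums)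
  have rel1: "Q = t * Q + (real b + 2) * P" and rel2: "R = t * R + (real b + 3) * t * Q + (real b + 2) * P"
    using series_rel[of t b P Q R] PQR unfolding Pn_def Qn_def Rn_def by auto
  have v0: "(cmod \<kappa>)\<^sup>2 * P = 1"
  proof -
    have "(\<lambda>n. of_real ((cmod \<kappa>)\<^sup>2 * Pn n) :: complex) sums of_real ((cmod \<kappa>)\<^sup>2 * P)"
      unfolding sums_of_real_iff by (intro sums_mult PQR)
    then have "A2_inner (real b) w0 w0 = of_real ((cmod \<kappa>)\<^sup>2 * P)" unfolding A2_inner_def T00(1) by (simp add: sums_iff)
    then have "(of_real ((cmod \<kappa>)\<^sup>2 * P) :: complex) = 1" using ip00 by (rule subst)
    then show ?thesis by (simp only: of_real_eq_1_iff)
  qed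
  have v1: "Nr = (cmod \<mu>)\<^sup>2 * R"
  proof -
    have "(\<lambda>n. of_real ((cmod \<mu>)\<^sup>2 * Rn n) :: complex) sums of_real ((cmod \<mu>)\<^sup>2 * R)"
      unfolding sums_of_real_iff by (intro sums_mult PQR)
    then have "A2_inner (real b) w1 w1 = of_real ((cmod \<mu>)\<^sup>2 * R)" unfolding A2_inner_def T11(1) by (simp add: sums_iff)
    then have "(of_real ((cmod \<mu>)\<^sup>2 * R) :: complex) = of_real Nr" using ip11 by (rule subst)
    then show ?thesis by (simp only: of_real_eq_iff)
  qed
  have v2: "cmod \<kappa> * cmod \<mu> * Q = 1"
  proof -
    have "(\<lambda>n. cnj \<kappa> * \<mu> * cnj \<alpha> * of_real (Qn n)) sums (cnj \<kappa> * \<mu> * cnj \<alpha> * of_real Q)"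
      by (intro sums_mult) (use PQR(2) sums_of_real_iff[where 'a=complex] in blast)
    then have "A2_inner (real b) w0 w1 = cnj \<kappa> * \<mu> * cnj \<alpha> * of_real Q" unfolding A2_inner_def T01 by (simp add: sums_iff)
    then have eq: "\<alpha> = cnj \<kappa> * \<mu> * cnj \<alpha> * of_real Q" using ip01 by simp
    have "cmod \<alpha> = cmod (cnj \<kappa> * \<mu> * cnj \<alpha> * of_real Q)" using eq by (rule arg_cong)
    also have "\<dots> = cmod \<kappa> * cmod \<mu> * cmod \<alpha> * \<bar>Q\<bar>" by (simp add: norm_mult)
    finally have "cmod \<alpha> = cmod \<kappa> * cmod \<mu> * cmod \<alpha> * \<bar>Q\<bar>" .
    moreover have "Q \<ge> 0" unfolding Q_def
    proof (rule suminf_nonneg[OF sQ])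
      fix n show "0 \<le> Qn n" unfolding Qn_def using bw_pos[of b n] t by simp
    qed
    ultimately have "cmod \<alpha> * 1 = cmod \<alpha> * (cmod \<kappa> * cmod \<mu> * Q)" by (simp add: mult_ac)
    then show ?thesis using al by simp
  qed
  define s where "s = real b + 2"
  have s: "s > 0" unfolding s_def by simp
  have E1: "(1 - t) * Q = s * P" using rel1 unfolding s_def by (simp add: algebra_simps)
  have E2: "(1 - t) * R = Q * (1 + s * t)" using rel1 rel2 unfolding s_def by (simp add: algebra_simps)
  have RP: "R * P * s = Q\<^sup>2 * (1 + s * t)"
  proof -
    have "(1 - t) * (R * P * s) = ((1 - t) * R) * (s * P)" by (simp add: algebra_simps)
    also have "\<dots> = (Q * (1 + s * t)) * ((1 - t) * Q)" using E1 E2 by simp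
    also have "\<dots> = (1 - t) * (Q\<^sup>2 * (1 + s * t))" by (simp add: power2_eq_square algebra_simps)
    finally show ?thesis using t by simp
  qed
  have NQ: "Nr * Q\<^sup>2 = R * P"
  proof -
    have "Nr * Q\<^sup>2 = ((cmod \<mu>)\<^sup>2 * R) * Q\<^sup>2 * ((cmod \<kappa>)\<^sup>2 * P)" using v1 v0 by simp
    also have "\<dots> = (cmod \<kappa> * cmod \<mu> * Q)\<^sup>2 * (R * P)" by (simp add: power2_eq_square algebra_simps)
    also have "\<dots> = R * P" using v2 by simp
    finally show ?thesis .
  qed
  have Q0: "Q \<noteq> 0" using v2 by auto
  have "Nr * Q\<^sup>2 * s = Q\<^sup>2 * (1 + s * t)" using NQ RP by simp
  then have "(Nr * s) * Q\<^sup>2 = (1 + s * t) * Q\<^sup>2" by (simp add: algebra_simps)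
  moreover have "Q\<^sup>2 \<noteq> 0" using Q0 by simp
  ultimately have "Nr * s = 1 + s * t" by simp
  then have "Nr = t + 1 / s" using s by (simp add: field_simps)
  then show False using Nr(3) unfolding s_def by simp
qed

end
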